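(* Let $d\ge1$ and let $\sigma$ be a finite positive measure on $\mathbb{R}^{2d}$ supported on a compact set $\Sigma\subset\mathbb{B}^{2d}(0,1)$. Let $\varphi$ be a Schwartz function on $\mathbb{R}^d$ and, for $k\in\mathbb{Z}$, let $P_{<k}f=f*\varphi_k$ with $\varphi_k(x)=2^{kd}\varphi(2^kx)$. For Schwartz functions $f_1,f_2$ on $\mathbb{R}^d$, $\mathrm{F}=(f_1,f_2)$, define \[ \mathfrak{A}_k^1(\mathrm{F})(x)=\sup_{1<t<2}\Big|\int_\Sigma P_{<k}f_1(x-2^{-k}ty_1)\,f_2(x-2^{-k}ty_2)\,\mathrm{d}\sigma(y_1,y_2)\Big| \] and $M_\sigma^2(f)(x)=\sup_{t>0}\int_\Sigma|f(x-ty_2)|\,\mathrm{d}\sigma(y_1,y_2)$. Then there is a constant $C$ independent of $k$, $x$ and $f_1,f_2$ such that \[ \mathfrak{A}_k^1(\mathrm{F})(x)\le C\,M_{HL}(f_1)(x)\,M_\sigma^2(f_2)(x)\qquad\text{for all }x\in\mathbb{R}^d,\ k\in\mathbb{Z}, \] where $M_{HL}$ is the Hardy–Littlewood maximal function.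
   Context: $\mathbb{B}^n(0,1)$ is the unit ball of $\mathbb{R}^n$. *)

theory Defs
  imports "HOL-Analysis.Analysis"
begin

definition pdiff :: "'n::finite \<Rightarrow> (real^'n \<Rightarrow> complex) \<Rightarrow> real^'n \<Rightarrow> complex" where
  "pdiff i f x = vector_derivative (\<lambda>t. f (x + t *\<^sub>R axis i 1)) (at 0)"

fun iter_pdiff :: "'n::finite list \<Rightarrow> (real^'n \<Rightarrow> complex) \<Rightarrow> real^'n \<Rightarrow> complex" where
  "iter_pdiff [] f = f"
| "iter_pdiff (i # is) f = pdiff i (iter_pdiff is f)"

definition schwartz :: "(real^'n::finite \<Rightarrow> complex) \<Rightarrow> bool" where
  "schwartz f \<longleftrightarrow> (\<forall>is. (\<forall>x. iter_pdiff is f differentiable (at x)) \<and>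
       (\<forall>N::nat. \<exists>B. \<forall>x. (1 + norm x) ^ N * norm (iter_pdiff is f x) \<le> B))"

definition dil :: "(real^'n::finite \<Rightarrow> complex) \<Rightarrow> int \<Rightarrow> real^'n \<Rightarrow> complex" where
  "dil \<phi> k x = of_real (2 powr (real_of_int k * real CARD('n))) * \<phi> ((2 powr real_of_int k) *\<^sub>R x)"

definition Pk :: "(real^'n::finite \<Rightarrow> complex) \<Rightarrow> int \<Rightarrow> (real^'n \<Rightarrow> complex) \<Rightarrow> real^'n \<Rightarrow> complex" where
  "Pk \<phi> k f x = (LINT y|lborel. f (x - y) * dil \<phi> k y)"

definition M_HL :: "(real^'n::finite \<Rightarrow> complex) \<Rightarrow> real^'n \<Rightarrow> ereal" where
  "M_HL f x = (SUP r\<in>{0<..}. ereal ((LINT y:ball x r|lborel. norm (f y)) / measure lborel (ball x r)))"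

definition M_sigma2 :: "((real^'n::finite) \<times> (real^'n)) measure \<Rightarrow> ((real^'n) \<times> (real^'n)) set
    \<Rightarrow> (real^'n \<Rightarrow> complex) \<Rightarrow> real^'n \<Rightarrow> ereal" where
  "M_sigma2 \<sigma> \<Sigma> f x = (SUP t\<in>{0<..}. ereal (LINT y:\<Sigma>|\<sigma>. norm (f (x - t *\<^sub>R snd y))))"

definition A1 :: "((real^'n::finite) \<times> (real^'n)) measure \<Rightarrow> ((real^'n) \<times> (real^'n)) set
    \<Rightarrow> (real^'n \<Rightarrow> complex) \<Rightarrow> int \<Rightarrow> (real^'n \<Rightarrow> complex) \<Rightarrow> (real^'n \<Rightarrow> complex) \<Rightarrow> real^'n \<Rightarrow> ereal" where
  "A1 \<sigma> \<Sigma> \<phi> k f1 f2 x = (SUP t\<in>{1<..<2}. ereal (norm (LINT y:\<Sigma>|\<sigma>.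
      Pk \<phi> k f1 (x - (2 powr (- real_of_int k) * t) *\<^sub>R fst y) *
      f2 (x - (2 powr (- real_of_int k) * t) *\<^sub>R snd y))))"

end

theory Submission
  imports Defs
begin


lemma schwartz_cont: assumes "schwartz f" shows "continuous_on UNIV f"
proof -
  have "\<forall>x. f differentiable (at x)" using assms unfolding schwartz_def
    by (metis iter_pdiff.simps(1))
  then show ?thesis
    by (simp add: continuous_at_imp_continuous_on differentiable_imp_continuous_within)
qed

lemma schwartz_meas: assumes "schwartz f" shows "f \<in> borel_measurable borel"
  using schwartz_cont[OF assms] by (simp add: borel_measurable_continuous_onI)  

lemma schwartz_decay: assumes "schwartz f" shows "\<exists>B. \<forall>x. (1 + norm x) ^ N * norm (f x) \<le> B"
  using assms unfolding schwartz_def by (metis iter_pdiff.simps(1))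

lemma schwartz_bdd: assumes "schwartz f" obtains B where "B \<ge> 0" "\<And>x. norm (f x) \<le> B"
proof -
  obtain B where "\<forall>x. (1 + norm x) ^ 0 * norm (f x) \<le> B" using schwartz_decay[OF assms] by blast
  then have "\<And>x. norm (f x) \<le> B" by simp
  moreover have "B \<ge> 0" using calculation[of 0] norm_ge_zero order_trans by blast
  ultimately show ?thesis using that by blast
qed

lemma lborel_reflect:
  fixes g :: "real^'n::finite \<Rightarrow> ennreal"
  assumes "g \<in> borel_measurable borel"
  shows "(\<integral>\<^sup>+y. g (z - y) \<partial>lborel) = (\<integral>\<^sup>+w. g w \<partial>lborel)"
proof -
  have "lborel = density (distr lborel borel (\<lambda>x. z + (-1::real) *\<^sub>R x)) (\<lambda>_. \<bar>-1::real\<bar>^DIM(real^'n))"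
    by (rule lborel_affine) simp
  then have e: "(lborel :: (real^'n) measure) = distr lborel borel (\<lambda>x. z - x)"
    by (simp add: density_1)
  have "(\<integral>\<^sup>+w. g w \<partial>lborel) = (\<integral>\<^sup>+w. g w \<partial>(distr lborel borel (\<lambda>x. z - x)))"
    by (subst e) simp
  also have "\<dots> = (\<integral>\<^sup>+y. g (z - y) \<partial>lborel)"
    using assms by (subst nn_integral_distr) auto
  finally show ?thesis by simp
qed

lemma schwartz_ball_int:
  assumes "schwartz f"
  shows "set_integrable lborel (ball x R) (\<lambda>y. norm (f y))"
proof -
  have "integrable lborel (\<lambda>y. indicator (cball x R) y *\<^sub>R norm (f y))"
    apply (rule borel_integrable_compact)
    using schwartz_cont[OF assms] by (auto intro!: continuous_intros elim: continuous_on_subset)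
  then have "set_integrable lborel (cball x R) (\<lambda>y. norm (f y))"
    by (simp add: set_integrable_def)
  then show ?thesis
    by (rule set_integrable_subset) auto
qed

lemma schwartz_ball_nn:
  assumes "schwartz f"
  shows "(\<integral>\<^sup>+y. ennreal (norm (f y)) * indicator (ball x R) y \<partial>lborel) = ennreal (LINT y:ball x R|lborel. norm (f y))"
proof -
  have "(\<integral>\<^sup>+y. ennreal (norm (f y)) * indicator (ball x R) y \<partial>lborel) = (\<integral>\<^sup>+y. ennreal (indicator (ball x R) y *\<^sub>R norm (f y)) \<partial>lborel)"
    by (intro nn_integral_cong) (auto simp: indicator_def)
  also have "\<dots> = ennreal (LINT y:ball x R|lborel. norm (f y))"
    unfolding set_lebesgue_integral_def
    using schwartz_ball_int[OF assms, of x R] unfolding set_integrable_def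
    by (intro nn_integral_eq_integral) auto
  finally show ?thesis .
qed

lemma MHL_fin:
  assumes "schwartz f"
  shows "\<exists>h\<ge>0. M_HL f x = ereal h"
proof -
  obtain B where B: "B \<ge> 0" "\<And>y. norm (f y) \<le> B" using schwartz_bdd[OF assms] by blast
  have avg: "0 \<le> (LINT y:ball x r|lborel. norm (f y)) / measure lborel (ball x r) \<and>
     (LINT y:ball x r|lborel. norm (f y)) / measure lborel (ball x r) \<le> B" if "r > 0" for r
  proof -
    have mpos: "measure lborel (ball x r) > 0" using content_ball_pos[OF that] by simp
    have "(LINT y:ball x r|lborel. norm (f y)) \<le> (LINT y:ball x r|lborel. B)"
      apply (rule set_integral_mono[OF schwartz_ball_int[OF assms]])
      using B mpos by (auto simp: set_integrable_def emeasure_ball intro!: integrable_real_mult_indicator integrable_real_indicator)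
    also have "\<dots> = B * measure lborel (ball x r)" using emeasure_ball[where c=x and r=r] that by (subst set_integral_const) auto
    finally have "(LINT y:ball x r|lborel. norm (f y)) \<le> B * measure lborel (ball x r)" .
    moreover have "0 \<le> (LINT y:ball x r|lborel. norm (f y))"
      unfolding set_lebesgue_integral_def by (intro integral_nonneg_AE AE_I2) simp
    ultimately show ?thesis using mpos by (simp add: divide_le_eq)
  qed
  have le: "M_HL f x \<le> ereal B" unfolding M_HL_def
    by (rule SUP_least) (use avg in auto)
  have ge: "0 \<le> M_HL f x" unfolding M_HL_def
    by (rule order_trans[OF _ SUP_upper[of 1]]) (use avg[of 1] in auto)
  have "\<bar>M_HL f x\<bar> \<noteq> \<infinity>" using le ge by auto
  then have "M_HL f x = ereal (real_of_ereal (M_HL f x))" by (simp add: ereal_real')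
  moreover have "real_of_ereal (M_HL f x) \<ge> 0" using ge by (simp add: real_of_ereal_pos)
  ultimately show ?thesis by blast
qed

lemma MHL_ball:
  fixes x :: "real^'n::finite"
  assumes "schwartz f" "R > 0" "M_HL f x = ereal h"
  shows "(\<integral>\<^sup>+y. ennreal (norm (f y)) * indicator (ball x R) y \<partial>lborel) \<le> ennreal (h * (unit_ball_vol (CARD('n)) * R ^ CARD('n)))"
proof -
  have mpos: "measure lborel (ball x R) > 0" using content_ball_pos[OF assms(2)] by simp
  have "ereal ((LINT y:ball x R|lborel. norm (f y)) / measure lborel (ball x R)) \<le> M_HL f x"
    unfolding M_HL_def by (rule SUP_upper) (use assms in auto)
  then have "(LINT y:ball x R|lborel. norm (f y)) / measure lborel (ball x R) \<le> h" using assms by simp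
  then have "(LINT y:ball x R|lborel. norm (f y)) \<le> h * measure lborel (ball x R)"
    using mpos by (simp add: divide_le_eq)
  also have "measure lborel (ball x R) = unit_ball_vol (CARD('n)) * R ^ CARD('n)"
    using assms(2) content_ball[where c=x and r=R] by simp
  finally show ?thesis unfolding schwartz_ball_nn[OF assms(1)] by (rule ennreal_leI)
qed



lemma ex_dyadic:
  fixes r s :: real
  assumes "r > 0"
  shows "\<exists>j::nat. s < 2^j * r \<and> (j = 0 \<or> 2^(j-1) * r \<le> s)"
proof -
  obtain n :: nat where "s / r < 2^n" using real_arch_pow[of 2 "s/r"] by auto
  then have ex: "s < 2^n * r" using assms by (simp add: divide_less_eq)
  define j where "j = (LEAST n::nat. s < 2^n * r)"
  have j1: "s < 2^j * r" unfolding j_def by (rule LeastI[of "\<lambda>n. s < 2^n * r", OF ex])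
  have "2^(j-1) * r \<le> s" if "j > 0"
  proof -
    have "j - 1 < j" using that by simp
    then have "\<not> s < 2^(j-1) * r" unfolding j_def using not_less_Least by blast
    then show ?thesis by simp
  qed
  then show ?thesis using j1 by blast
qed

lemma dil_bound:
  fixes \<phi> :: "real^'n::finite \<Rightarrow> complex"
  assumes B: "\<And>y. (1 + norm y) ^ (CARD('n) + 1) * norm (\<phi> y) \<le> B"
    and jy: "norm y < 2^j * 2 powr (- real_of_int k)"
    and jy2: "j = 0 \<or> 2^(j-1) * 2 powr (- real_of_int k) \<le> norm y"
  shows "norm (dil \<phi> k y) \<le> B * 2^(CARD('n)+1) / (2 powr (- real_of_int k))^CARD('n) * (1 / 2^(CARD('n)+1))^j"
proof -
  define d where "d = CARD('n)"
  define r where "r = 2 powr (- real_of_int k)"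
  define a where "a = 2 powr (real_of_int k)"
  have rpos: "r > 0" and apos: "a > 0" unfolding r_def a_def by auto
  have ar: "a * r = 1" unfolding a_def r_def by (simp add: powr_add[symmetric])
  have "2 powr (real_of_int k * real d) = a ^ d"
    unfolding a_def by (simp add: powr_realpow[symmetric] powr_powr)
  then have nd: "norm (dil \<phi> k y) = a^d * norm (\<phi> (a *\<^sub>R y))"
    unfolding dil_def d_def using apos by (simp add: norm_mult norm_power flip: a_def)
  have Bnn: "B \<ge> 0" using B[of 0] by simp (metis norm_ge_zero order_trans)
  have pw: "norm (\<phi> w) \<le> B / (1 + norm w)^(d+1)" for w
    using B[of w] unfolding d_def
    by (simp add: le_divide_eq mult.commute add_pos_nonneg)
  have na: "norm (a *\<^sub>R y) = a * norm y" using apos by simp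
  have main: "norm (\<phi> (a *\<^sub>R y)) \<le> B * 2^(d+1) * (1 / 2^(d+1))^j"
  proof (cases "j = 0")
    case True
    have "norm (\<phi> (a *\<^sub>R y)) \<le> B / (1 + norm (a *\<^sub>R y))^(d+1)" by (rule pw)
    also have "\<dots> \<le> B / 1"
      using Bnn by (intro divide_left_mono one_le_power) (auto intro!: mult_pos_pos add_pos_nonneg zero_less_power)
    also have "\<dots> = B" by simp
    also have "\<dots> \<le> B * 2^(d+1)" using Bnn mult_left_mono[OF one_le_power[of "2::real" "d+1"] Bnn] by simp
    finally show ?thesis using True by simp
  next
    case False
    then have "2^(j-1) * r \<le> norm y" using jy2 unfolding r_def by blast
    then have "a * (2^(j-1) * r) \<le> a * norm y" using apos by simp
    then have "2^(j-1) \<le> a * norm y" using ar by (metis mult.assoc mult.commute mult_1)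
    then have le1: "(2::real)^(j-1) \<le> 1 + norm (a *\<^sub>R y)" using na apos by (simp add: abs_of_pos)
    have "norm (\<phi> (a *\<^sub>R y)) \<le> B / (1 + norm (a *\<^sub>R y))^(d+1)" by (rule pw)
    also have "\<dots> \<le> B / (2^(j-1))^(d+1)"
      using Bnn le1 by (intro divide_left_mono power_mono mult_pos_pos) (auto intro!: zero_less_power add_pos_nonneg mult_pos_pos)
    also have "(2::real)^(j-1) = 2^j / 2" using False by (simp add: power_eq_if)
    also have "B / (2^j / 2)^(d+1) = B * 2^(d+1) * (1 / 2^(d+1))^j"
      by (simp add: power_divide field_simps flip: power_mult power_add)
    finally show ?thesis .
  qed
  have "norm (dil \<phi> k y) \<le> a^d * (B * 2^(d+1) * (1 / 2^(d+1))^j)"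
    unfolding nd using main apos by (intro mult_left_mono) auto
  also have "a^d = 1 / r^d" using ar apos rpos by (simp add: field_simps flip: power_mult_distrib)
  finally show ?thesis unfolding r_def d_def by simp
qed



lemma ball_pred[measurable]: "Measurable.pred borel (\<lambda>x::'a::metric_space. x \<in> ball c r)"
  by (simp del: mem_ball add: pred_def)

lemma geom_half: "(\<Sum>j. ennreal (K * (1/2)^j)) = ennreal (2 * K)" if "K \<ge> 0" for K :: real
proof -
  have s: "summable (\<lambda>j. K * (1/2::real)^j)"
    by (intro summable_mult summable_geometric) simp
  have "(\<Sum>j. ennreal (K * (1/2)^j)) = ennreal (\<Sum>j. K * (1/2::real)^j)"
    using that s by (intro suminf_ennreal2) auto
  also have "(\<Sum>j. K * (1/2::real)^j) = K * (\<Sum>j. (1/2::real)^j)"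
    by (intro suminf_mult summable_geometric) simp
  also have "(\<Sum>j. (1/2::real)^j) = 2"
    by (subst suminf_geometric) auto
  finally show ?thesis by (simp add: mult.commute)
qed

lemma pow_identity:
  fixes r :: real and d j :: nat
  assumes "r > 0"
  shows "(1 / 2^(d+1))^j * (4 * 2^j * r)^d / r^d = 4^d * (1/2)^j"
proof -
  have e: "((2::real)^(d+1))^j = (2^j)^d * 2^j"
    by (simp flip: power_mult power_add add: mult.commute)
  have e2: "((2::real)^j)^d = (2^d)^j" by (simp flip: power_mult add: mult.commute)
  show ?thesis using assms
    by (simp add: e2 power_mult_distrib power_divide e field_simps)
qed

lemma conv_bound:
  fixes \<phi> :: "real^'n::finite \<Rightarrow> complex"
  assumes "schwartz \<phi>"
  shows "\<exists>C\<ge>0. \<forall>k f x z h. schwartz f \<longrightarrow> M_HL f x = ereal h \<longrightarrow>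
           dist z x \<le> 2 * 2 powr (- real_of_int k) \<longrightarrow> norm (Pk \<phi> k f z) \<le> C * h"
proof -
  define d where "d = CARD('n)"
  obtain B where B: "\<And>y. (1 + norm y) ^ (CARD('n) + 1) * norm (\<phi> y) \<le> B"
    using schwartz_decay[OF assms, of "CARD('n) + 1"] by blast
  have Bnn: "B \<ge> 0" using B[of 0] by simp (metis norm_ge_zero order_trans)
  define \<omega> where "\<omega> = unit_ball_vol (real d)"
  have \<omega>pos: "\<omega> > 0" unfolding \<omega>_def by simp
  define K where "K = B * 2^(d+1) * \<omega> * 4^d"
  have Knn: "K \<ge> 0" unfolding K_def using Bnn \<omega>pos by simp
  show ?thesis
  proof (intro exI[of _ "2 * K"] conjI allI impI)
    show "0 \<le> 2 * K" using Knn by simp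
    fix k :: int and f :: "real^'n \<Rightarrow> complex" and x z :: "real^'n" and h :: real
    assume sf: "schwartz f" and Mh: "M_HL f x = ereal h" and dz: "dist z x \<le> 2 * 2 powr (- real_of_int k)"
    define r where "r = 2 powr (- real_of_int k)"
    have rpos: "r > 0" unfolding r_def by simp
    have hnn: "h \<ge> 0" using MHL_fin[OF sf, of x] Mh by auto
    define c where "c j = B * 2^(d+1) / r^d * (1 / 2^(d+1))^j" for j :: nat
    have cnn: "c j \<ge> 0" for j unfolding c_def using Bnn rpos by simp
    have fm: "f \<in> borel_measurable borel" by (rule schwartz_meas[OF sf])
    have fzm: "(\<lambda>y. f (z - y)) \<in> borel_measurable borel"
      using fm by (intro measurable_compose[OF _ fm]) auto
    define g where "g y = ennreal (norm (f (z - y)))" for y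
    have gm: "g \<in> borel_measurable borel" unfolding g_def using fzm by measurable
    have step1: "ennreal (norm (Pk \<phi> k f z)) \<le> (\<integral>\<^sup>+y. ennreal (norm (f (z - y) * dil \<phi> k y)) \<partial>lborel)"
    proof (cases "integrable lborel (\<lambda>y. f (z - y) * dil \<phi> k y)")
      case True
      then show ?thesis unfolding Pk_def by (rule integral_norm_bound_ennreal)
    next
      case False
      then show ?thesis unfolding Pk_def by (simp add: not_integrable_integral_eq)
    qed
    have pt: "ennreal (norm (dil \<phi> k y)) \<le> (\<Sum>j. ennreal (c j) * indicator (ball 0 (2^j * r)) y)" for y
    proof -
      obtain j where j1: "norm y < 2^j * r" and j2: "j = 0 \<or> 2^(j-1) * r \<le> norm y"
        using ex_dyadic[OF rpos, of "norm y"] by blast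
      have "norm (dil \<phi> k y) \<le> c j"
        unfolding c_def d_def r_def
        by (rule dil_bound[OF B]) (use j1 j2 in \<open>auto simp: r_def\<close>)
      then have "ennreal (norm (dil \<phi> k y)) \<le> ennreal (c j) * indicator (ball 0 (2^j * r)) y"
        using j1 by (simp add: indicator_def dist_norm ennreal_leI)
      also have "\<dots> = (\<Sum>i\<in>{j}. ennreal (c i) * indicator (ball 0 (2^i * r)) y)" by (simp only: sum.insert_if sum.empty finite.emptyI) simp
      also have "\<dots> \<le> (\<Sum>i. ennreal (c i) * indicator (ball 0 (2^i * r)) y)"
        by (intro sum_le_suminf summableI) auto
      finally show ?thesis .
    qed
    have ball_int: "(\<integral>\<^sup>+y. g y * indicator (ball 0 (2^j * r)) y \<partial>lborel) \<le> ennreal (h * (\<omega> * (4 * 2^j * r)^d))" for j :: nat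
    proof -
      define \<rho> where "\<rho> = 2^j * r"
      have \<rho>pos: "\<rho> > 0" unfolding \<rho>_def using rpos by simp
      define G where "G w = ennreal (norm (f w)) * indicator (ball z \<rho>) w" for w
      have Gm: "G \<in> borel_measurable borel" unfolding G_def using fm by measurable
      have "(\<integral>\<^sup>+y. g y * indicator (ball 0 \<rho>) y \<partial>lborel) = (\<integral>\<^sup>+y. G (z - y) \<partial>lborel)"
        by (intro nn_integral_cong) (simp add: g_def G_def indicator_def dist_norm)
      also have "\<dots> = (\<integral>\<^sup>+w. G w \<partial>lborel)" by (rule lborel_reflect[OF Gm])
      also have "\<dots> \<le> (\<integral>\<^sup>+w. ennreal (norm (f w)) * indicator (ball x (\<rho> + 2 * r)) w \<partial>lborel)"
      proof (intro nn_integral_mono)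
        fix w
        have "w \<in> ball z \<rho> \<Longrightarrow> w \<in> ball x (\<rho> + 2 * r)"
          using dz unfolding r_def[symmetric] mem_ball
          by (smt (verit) dist_commute dist_triangle)
        then show "G w \<le> ennreal (norm (f w)) * indicator (ball x (\<rho> + 2 * r)) w"
          unfolding G_def by (auto simp: indicator_def)
      qed
      also have "\<dots> \<le> ennreal (h * (unit_ball_vol (CARD('n)) * (\<rho> + 2 * r) ^ CARD('n)))"
        by (rule MHL_ball[OF sf _ Mh]) (use \<rho>pos rpos in auto)
      also have "\<dots> \<le> ennreal (h * (\<omega> * (4 * 2^j * r)^d))"
      proof -
        have "(1::real) \<le> 2^j" by simp
        then have T: "(2::real) \<le> 3 * 2^j" by linarith
        have X: "3 * r \<le> 2^j * (3 * r)" using mult_right_mono[of 1 "2^j" "3*r"] rpos by simp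
        then have "\<rho> + 2 * r \<le> 4 * 2^j * r" unfolding \<rho>_def using rpos T by (simp add: algebra_simps)
        then have "(\<rho> + 2 * r)^d \<le> (4 * 2^j * r)^d" using \<rho>pos rpos by (intro power_mono) auto
        then show ?thesis unfolding \<omega>_def d_def using hnn
          by (intro ennreal_leI mult_left_mono) auto
      qed
      finally show ?thesis unfolding \<rho>_def .
    qed
    have "ennreal (norm (Pk \<phi> k f z)) \<le> (\<integral>\<^sup>+y. g y * ennreal (norm (dil \<phi> k y)) \<partial>lborel)"
      using step1 by (simp add: g_def norm_mult ennreal_mult)
    also have "\<dots> \<le> (\<integral>\<^sup>+y. g y * (\<Sum>j. ennreal (c j) * indicator (ball 0 (2^j * r)) y) \<partial>lborel)"
      by (intro nn_integral_mono mult_left_mono pt) auto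
    also have "\<dots> = (\<integral>\<^sup>+y. (\<Sum>j. ennreal (c j) * (g y * indicator (ball 0 (2^j * r)) y)) \<partial>lborel)"
      by (intro nn_integral_cong) (simp flip: ennreal_suminf_cmult add: mult_ac)
    also have "\<dots> = (\<Sum>j. (\<integral>\<^sup>+y. ennreal (c j) * (g y * indicator (ball 0 (2^j * r)) y) \<partial>lborel))"
      by (rule nn_integral_suminf) (use gm in measurable)
    also have "\<dots> = (\<Sum>j. ennreal (c j) * (\<integral>\<^sup>+y. g y * indicator (ball 0 (2^j * r)) y \<partial>lborel))"
      by (intro suminf_cong nn_integral_cmult) (use gm in measurable)
    also have "\<dots> \<le> (\<Sum>j. ennreal (c j) * ennreal (h * (\<omega> * (4 * 2^j * r)^d)))"
      by (intro suminf_le mult_left_mono ball_int summableI) auto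
    also have "\<dots> = (\<Sum>j. ennreal (K * h * (1/2)^j))"
    proof (intro suminf_cong)
      fix j :: nat
      have "c j * (h * (\<omega> * (4 * 2^j * r)^d)) = B * 2^(d+1) * \<omega> * h * ((1 / 2^(d+1))^j * (4 * 2^j * r)^d / r^d)"
        unfolding c_def by (simp add: field_simps)
      also have "\<dots> = K * h * (1/2)^j"
        unfolding pow_identity[OF rpos] K_def by (simp add: field_simps)
      finally have eq: "c j * (h * (\<omega> * (4 * 2^j * r)^d)) = K * h * (1/2)^j" .
      have "ennreal (c j) * ennreal (h * (\<omega> * (4 * 2^j * r)^d)) = ennreal (c j * (h * (\<omega> * (4 * 2^j * r)^d)))"
        using cnn[of j] hnn \<omega>pos rpos by (intro ennreal_mult[symmetric]) auto
      then show "ennreal (c j) * ennreal (h * (\<omega> * (4 * 2^j * r)^d)) = ennreal (K * h * (1/2)^j)"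
        by (simp only: eq)
    qed
    also have "\<dots> = ennreal (2 * (K * h))"
      by (rule geom_half) (use Knn hnn in simp)
    finally have "ennreal (norm (Pk \<phi> k f z)) \<le> ennreal (2 * (K * h))" .
    then have "norm (Pk \<phi> k f z) \<le> 2 * (K * h)"
      using Knn hnn by (subst (asm) ennreal_le_iff) auto
    then show "norm (Pk \<phi> k f z) \<le> 2 * K * h" by (simp add: mult.assoc)
  qed
qed



theorem lemma4p1:
  fixes \<sigma> :: "((real^'n::finite) \<times> (real^'n)) measure"
    and \<Sigma> :: "((real^'n) \<times> (real^'n)) set"
    and \<phi> :: "real^'n \<Rightarrow> complex"
  assumes "sets \<sigma> = sets borel"
    and "finite_measure \<sigma>"
    and "compact \<Sigma>"
    and "\<Sigma> \<subseteq> ball 0 1"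
    and "emeasure \<sigma> (UNIV - \<Sigma>) = 0"
    and "schwartz \<phi>"
  shows "\<exists>C::real. \<forall>(k::int) (x::real^'n) f1 f2. schwartz f1 \<longrightarrow> schwartz f2 \<longrightarrow>
           A1 \<sigma> \<Sigma> \<phi> k f1 f2 x \<le> ereal C * M_HL f1 x * M_sigma2 \<sigma> \<Sigma> f2 x"
proof -
  interpret fin: finite_measure \<sigma> by (rule assms(2))
  obtain C1 where C1: "C1 \<ge> 0" and C1b: "\<And>k f x z h. schwartz f \<Longrightarrow> M_HL f x = ereal h \<Longrightarrow>
           dist z x \<le> 2 * 2 powr (- real_of_int k) \<Longrightarrow> norm (Pk \<phi> k f z) \<le> C1 * h"
    using conv_bound[OF assms(6)] by blast
  have Sig: "\<Sigma> \<in> sets \<sigma>" using assms(1,3) by (simp add: compact_imp_closed)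
  show ?thesis
  proof (intro exI[of _ C1] allI impI)
    fix k :: int and x :: "real^'n" and f1 f2 :: "real^'n \<Rightarrow> complex"
    assume sf1: "schwartz f1" and sf2: "schwartz f2"
    obtain h where hnn: "h \<ge> 0" and Mh: "M_HL f1 x = ereal h" using MHL_fin[OF sf1] by blast
    obtain B2 where B2: "B2 \<ge> 0" "\<And>y. norm (f2 y) \<le> B2" using schwartz_bdd[OF sf2] by blast
    have fm2: "f2 \<in> borel_measurable borel" by (rule schwartz_meas[OF sf2])
    define r where "r = 2 powr (- real_of_int k)"
    have rpos: "r > 0" unfolding r_def by simp
    show "A1 \<sigma> \<Sigma> \<phi> k f1 f2 x \<le> ereal C1 * M_HL f1 x * M_sigma2 \<sigma> \<Sigma> f2 x"
      unfolding A1_def r_def[symmetric]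
    proof (rule SUP_least)
      fix t :: real assume t: "t \<in> {1<..<2}"
      define s where "s = r * t"
      have spos: "s > 0" and s2: "s \<le> 2 * r" unfolding s_def using t rpos by auto
      define F where "F y = Pk \<phi> k f1 (x - s *\<^sub>R fst y) * f2 (x - s *\<^sub>R snd y)" for y :: "(real^'n) \<times> (real^'n)"
      define G where "G y = norm (f2 (x - s *\<^sub>R snd y))" for y :: "(real^'n) \<times> (real^'n)"
      have c1: "continuous_on UNIV (\<lambda>y::(real^'n)\<times>(real^'n). x - s *\<^sub>R snd y)"
        by (intro continuous_intros)
      have c2: "continuous_on UNIV (\<lambda>y::(real^'n)\<times>(real^'n). f2 (x - s *\<^sub>R snd y))"
        using continuous_on_compose2[OF schwartz_cont[OF sf2] c1] by simp
      have Gm: "G \<in> borel_measurable \<sigma>"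
        unfolding G_def measurable_cong_sets[OF assms(1) refl]
        by (intro borel_measurable_continuous_onI continuous_on_norm c2)
      have Im: "(\<lambda>y. indicator \<Sigma> y * G y) \<in> borel_measurable \<sigma>"
        using Gm Sig by measurable
      have Gint: "integrable \<sigma> (\<lambda>y. indicator \<Sigma> y * G y)"
        by (rule fin.integrable_const_bound[where B=B2, OF _ Im]) (use B2 in \<open>auto simp: G_def indicator_def\<close>)
      have pt: "norm (indicator \<Sigma> y *\<^sub>R F y) \<le> C1 * h * (indicator \<Sigma> y * G y)" for y
      proof (cases "y \<in> \<Sigma>")
        case True
        have "norm (fst y) \<le> norm y" using norm_fst_le[of "fst y" "snd y"] by simp
        also have "norm y < 1" using True assms(4) by auto
        finally have "dist (x - s *\<^sub>R fst y) x \<le> 2 * 2 powr (- real_of_int k)"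
          using spos s2 unfolding r_def dist_norm
          by (simp add: abs_of_pos) (smt (verit) mult_left_le spos)
        then have "norm (Pk \<phi> k f1 (x - s *\<^sub>R fst y)) \<le> C1 * h" by (rule C1b[OF sf1 Mh])
        then have "norm (F y) \<le> C1 * h * G y"
          unfolding F_def G_def norm_mult by (intro mult_right_mono) auto
        then show ?thesis using True by simp
      next
        case False
        then show ?thesis by simp
      qed
      have "norm (LINT y:\<Sigma>|\<sigma>. F y) \<le> (\<integral>y. C1 * h * (indicator \<Sigma> y * G y) \<partial>\<sigma>)"
      proof (cases "integrable \<sigma> (\<lambda>y. indicator \<Sigma> y *\<^sub>R F y)")
        case True
        show ?thesis unfolding set_lebesgue_integral_def
          by (rule Bochner_Integration.integral_norm_bound_integral[OF True]) (use Gint pt in auto)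
      next
        case False
        then have "(LINT y:\<Sigma>|\<sigma>. F y) = 0"
          unfolding set_lebesgue_integral_def by (rule not_integrable_integral_eq)
        moreover have "0 \<le> (\<integral>y. C1 * h * (indicator \<Sigma> y * G y) \<partial>\<sigma>)"
          using C1 hnn by (intro integral_nonneg_AE AE_I2) (auto simp: G_def)
        ultimately show ?thesis by simp
      qed
      also have "\<dots> = C1 * h * (LINT y:\<Sigma>|\<sigma>. G y)"
        unfolding set_lebesgue_integral_def by simp
      finally have I: "norm (LINT y:\<Sigma>|\<sigma>. F y) \<le> C1 * h * (LINT y:\<Sigma>|\<sigma>. G y)" .
      have M2: "ereal (LINT y:\<Sigma>|\<sigma>. G y) \<le> M_sigma2 \<sigma> \<Sigma> f2 x"
        unfolding M_sigma2_def G_def by (rule SUP_upper) (use spos in auto)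
      have "ereal (norm (LINT y:\<Sigma>|\<sigma>. F y)) \<le> ereal (C1 * h) * ereal (LINT y:\<Sigma>|\<sigma>. G y)"
        using I by simp
      also have "\<dots> \<le> ereal (C1 * h) * M_sigma2 \<sigma> \<Sigma> f2 x"
        using M2 C1 hnn by (intro ereal_mult_left_mono) auto
      also have "\<dots> = ereal C1 * M_HL f1 x * M_sigma2 \<sigma> \<Sigma> f2 x"
        using Mh by simp
      finally show "ereal (norm (LINT y:\<Sigma>|\<sigma>. Pk \<phi> k f1 (x - (r * t) *\<^sub>R fst y) * f2 (x - (r * t) *\<^sub>R snd y)))
          \<le> ereal C1 * M_HL f1 x * M_sigma2 \<sigma> \<Sigma> f2 x"
        unfolding F_def s_def .
    qed
  qed
qed

end
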